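(* Let $H$ be a complex Hilbert space and let $T$ be a densely defined closed operator in $H$ with $D(T)\subset D(T^* )$, and write $T=A+iB$ where $A=\frac{T+T^*}{2}$ and $B=\frac{T-T^*}{2i}$ (both defined on $D(T)$). Assume that $A$ is positive or $B$ is positive. If $T$ is nilpotent, i.e. there is $n\in\mathbb{N}$ such that $T^n$ is well defined with $D(T^n)=D(T)$ and $T^nx=0$ for all $x\in D(T)$, then $T\in B(H)$, $T$ is normal, and $T=0$ everywhere on $H$.
   Context: Products of unbounded operators are taken on natural domains: $D(ST)=\{x\in D(T): Tx\in D(S)\}$; sums on $D(S+T)=D(S)\cap D(T)$. A symmetric operator $S$ (densely defined with $S\subset S^*$) is positive if $\langle Sx,x\rangle\geq 0$ for all $x\in D(S)$. $B(H)$ is the algebra of everywhere defined bounded operators on $H$. *)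

theory Defs
  imports "HOL-Analysis.Analysis"
begin

text \<open>The distribution has no complex inner product spaces, so we introduce them as a
type class: a real normed vector space with a compatible complex scalar multiplication and
a complex inner product (linear in the second, conjugate linear in the first argument)
inducing the norm.\<close>

class complex_inner = real_normed_vector +
  fixes scaleC :: "complex \<Rightarrow> 'a \<Rightarrow> 'a" (infixr \<open>*\<^sub>C\<close> 75)
  fixes cinner :: "'a \<Rightarrow> 'a \<Rightarrow> complex"
  assumes scaleC_add_right: "a *\<^sub>C (x + y) = a *\<^sub>C x + a *\<^sub>C y"
  and scaleC_add_left: "(a + b) *\<^sub>C x = a *\<^sub>C x + b *\<^sub>C x"
  and scaleC_scaleC: "a *\<^sub>C (b *\<^sub>C x) = (a * b) *\<^sub>C x"
  and scaleC_one: "1 *\<^sub>C x = x"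
  and scaleR_scaleC: "scaleR r x = complex_of_real r *\<^sub>C x"
  and cinner_commute: "cinner x y = cnj (cinner y x)"
  and cinner_add_right: "cinner x (y + z) = cinner x y + cinner x z"
  and cinner_scaleC_right: "cinner x (a *\<^sub>C y) = a * cinner x y"
  and cinner_self_norm: "cinner x x = complex_of_real ((norm x)\<^sup>2)"

class chilbert_space = complex_inner + complete_space

instantiation complex :: chilbert_space
begin
definition scaleC_complex :: "complex \<Rightarrow> complex \<Rightarrow> complex" where
  "scaleC_complex a x = a * x"
definition cinner_complex :: "complex \<Rightarrow> complex \<Rightarrow> complex" where
  "cinner_complex x y = cnj x * y"
instance
proof
  fix a b x y z :: complex and r :: real
  show "a *\<^sub>C (x + y) = a *\<^sub>C x + a *\<^sub>C y" by (simp add: scaleC_complex_def distrib_left)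
  show "(a + b) *\<^sub>C x = a *\<^sub>C x + b *\<^sub>C x" by (simp add: scaleC_complex_def distrib_right)
  show "a *\<^sub>C (b *\<^sub>C x) = (a * b) *\<^sub>C x" by (simp add: scaleC_complex_def mult.assoc)
  show "1 *\<^sub>C x = x" by (simp add: scaleC_complex_def)
  show "scaleR r x = complex_of_real r *\<^sub>C x" by (simp add: scaleC_complex_def scaleR_conv_of_real)
  show "cinner x y = cnj (cinner y x)" by (simp add: cinner_complex_def mult.commute)
  show "cinner x (y + z) = cinner x y + cinner x z" by (simp add: cinner_complex_def distrib_left)
  show "cinner x (a *\<^sub>C y) = a * cinner x y" by (simp add: cinner_complex_def scaleC_complex_def mult.left_commute)
  show "cinner x x = complex_of_real ((norm x)\<^sup>2)"
    unfolding cinner_complex_def by (metis complex_norm_square mult.commute)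
qed
end

text \<open>An operator in H is a pair (domain, action); the action outside the domain is
irrelevant.\<close>
type_synonym 'a op = "'a set \<times> ('a \<Rightarrow> 'a)"

definition op_dom :: "'a op \<Rightarrow> 'a set" where "op_dom T = fst T"
definition app :: "'a op \<Rightarrow> 'a \<Rightarrow> 'a" where "app T = snd T"

definition csubspace :: "'a::complex_inner set \<Rightarrow> bool" where
  "csubspace D \<longleftrightarrow> 0 \<in> D \<and> (\<forall>x\<in>D. \<forall>y\<in>D. x + y \<in> D) \<and> (\<forall>a. \<forall>x\<in>D. a *\<^sub>C x \<in> D)"

definition linear_op :: "'a::complex_inner op \<Rightarrow> bool" where
  "linear_op T \<longleftrightarrow> csubspace (op_dom T) \<and>
     (\<forall>x\<in>op_dom T. \<forall>y\<in>op_dom T. app T (x + y) = app T x + app T y) \<and>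
     (\<forall>a. \<forall>x\<in>op_dom T. app T (a *\<^sub>C x) = a *\<^sub>C app T x)"

definition densely_defined :: "'a::complex_inner op \<Rightarrow> bool" where
  "densely_defined T \<longleftrightarrow> closure (op_dom T) = UNIV"

definition graph :: "'a op \<Rightarrow> ('a \<times> 'a) set" where
  "graph T = {(x, app T x) | x. x \<in> op_dom T}"

definition closed_op :: "'a::complex_inner op \<Rightarrow> bool" where
  "closed_op T \<longleftrightarrow> closed (graph T)"

definition op_eq :: "'a op \<Rightarrow> 'a op \<Rightarrow> bool" where
  "op_eq S T \<longleftrightarrow> op_dom S = op_dom T \<and> (\<forall>x\<in>op_dom S. app S x = app T x)"

definition adj :: "'a::complex_inner op \<Rightarrow> 'a op" where
  "adj T = ({y. \<exists>z. \<forall>x\<in>op_dom T. cinner (app T x) y = cinner x z},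
            \<lambda>y. if \<exists>z. \<forall>x\<in>op_dom T. cinner (app T x) y = cinner x z
                then (THE z. \<forall>x\<in>op_dom T. cinner (app T x) y = cinner x z) else 0)"

definition op_comp :: "'a op \<Rightarrow> 'a op \<Rightarrow> 'a op" where
  "op_comp S T = ({x \<in> op_dom T. app T x \<in> op_dom S}, \<lambda>x. app S (app T x))"

definition op_id :: "'a op" where "op_id = (UNIV, \<lambda>x. x)"

primrec op_pow :: "'a op \<Rightarrow> nat \<Rightarrow> 'a op" where
  "op_pow T 0 = op_id"
| "op_pow T (Suc n) = op_comp T (op_pow T n)"

text \<open>Real and imaginary parts A = (T+T*)/2 and B = (T-T*)/(2i), defined on D(T)
(= D(T) \<inter> D(T*) under the standing hypothesis D(T) \<subseteq> D(T*)).\<close>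
definition re_part :: "'a::complex_inner op \<Rightarrow> 'a op" where
  "re_part T = (op_dom T \<inter> op_dom (adj T), \<lambda>x. (1/2) *\<^sub>C (app T x + app (adj T) x))"

definition im_part :: "'a::complex_inner op \<Rightarrow> 'a op" where
  "im_part T = (op_dom T \<inter> op_dom (adj T), \<lambda>x. (1/(2*\<i>)) *\<^sub>C (app T x - app (adj T) x))"

definition symmetric_op :: "'a::complex_inner op \<Rightarrow> bool" where
  "symmetric_op S \<longleftrightarrow> densely_defined S \<and> op_dom S \<subseteq> op_dom (adj S) \<and>
     (\<forall>x\<in>op_dom S. app (adj S) x = app S x)"

definition positive_op :: "'a::complex_inner op \<Rightarrow> bool" where
  "positive_op S \<longleftrightarrow> symmetric_op S \<and>
     (\<forall>x\<in>op_dom S. cinner (app S x) x \<in> \<real> \<and> Re (cinner (app S x) x) \<ge> 0)"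

definition in_BH :: "'a::complex_inner op \<Rightarrow> bool" where
  "in_BH T \<longleftrightarrow> op_dom T = UNIV \<and> linear_op T \<and> (\<exists>K. \<forall>x. norm (app T x) \<le> K * norm x)"

definition normal_op :: "'a::complex_inner op \<Rightarrow> bool" where
  "normal_op T \<longleftrightarrow> densely_defined T \<and> closed_op T \<and>
     op_eq (op_comp T (adj T)) (op_comp (adj T) T)"

end

theory Submission
  imports Defs
begin

lemma ci_zero_right: "cinner (x::'a::complex_inner) 0 = 0"
proof -
  have "cinner x (0+0) = cinner x 0 + cinner x 0" by (rule cinner_add_right)
  then show ?thesis by simp
qed

lemma ci_zero_left: "cinner 0 (x::'a::complex_inner) = 0"
  by (metis ci_zero_right cinner_commute complex_cnj_zero)

lemma ci_add_left: "cinner ((x::'a::complex_inner) + y) z = cinner x z + cinner y z"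
  by (metis cinner_add_right cinner_commute complex_cnj_add)

lemma ci_scaleC_left: "cinner (a *\<^sub>C (x::'a::complex_inner)) y = cnj a * cinner x y"
  by (metis cinner_commute cinner_scaleC_right complex_cnj_mult)

lemma ci_minus_right: "cinner (x::'a::complex_inner) (- y) = - cinner x y"
proof -
  have "cinner x (y + - y) = cinner x y + cinner x (-y)" by (rule cinner_add_right)
  then have "cinner x y + cinner x (-y) = 0" by (simp add: ci_zero_right)
  then show ?thesis by (metis neg_eq_iff_add_eq_0)
qed

lemma ci_minus_left: "cinner (- (x::'a::complex_inner)) y = - cinner x y"
  by (metis ci_minus_right cinner_commute complex_cnj_minus)

lemma ci_diff_right: "cinner (x::'a::complex_inner) (y - z) = cinner x y - cinner x z"
  unfolding diff_conv_add_uminus by (simp only: cinner_add_right ci_minus_right)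

lemma ci_diff_left: "cinner ((x::'a::complex_inner) - y) z = cinner x z - cinner y z"
  unfolding diff_conv_add_uminus by (simp only: ci_add_left ci_minus_left)

lemma norm_sq_ci: "(norm (x::'a::complex_inner))^2 = Re (cinner x x)"
  by (simp add: cinner_self_norm)

lemma dense_orth_zero:
  fixes z :: "'a::complex_inner"
  assumes "closure D = UNIV" "\<forall>x\<in>D. cinner x z = 0"
  shows "z = 0"
proof -
  have "norm z \<le> e" if ep: "e > 0" for e
  proof -
    have "z \<in> closure D" using assms(1) by simp
    then obtain x where x: "x \<in> D" "dist x z < e" using ep unfolding closure_approachable by blast
    have cz: "cinner z x = 0" using assms(2) x(1) by (metis cinner_commute complex_cnj_zero)
    have "cinner (x - z) (x - z) = cinner x x + cinner z z"
      using assms(2) x(1) cz by (simp add: ci_diff_left ci_diff_right)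
    then have "(norm (x - z))^2 = (norm x)^2 + (norm z)^2" by (simp add: norm_sq_ci)
    then have "(norm z)^2 \<le> (norm (x - z))^2" by simp
    then have "norm z \<le> norm (x - z)" using power2_le_imp_le by auto
    then show ?thesis using x(2) by (simp add: dist_norm)
  qed
  then have "norm z \<le> 0"
    by (metis dual_order.refl field_lbound_gt_zero le_less_trans less_le_not_le norm_ge_zero)
  then show ?thesis by simp
qed

lemma adj_char:
  fixes T :: "'a::complex_inner op"
  assumes "densely_defined T" "y \<in> op_dom (adj T)" "x \<in> op_dom T"
  shows "cinner (app T x) y = cinner x (app (adj T) y)"
proof -
  let ?P = "\<lambda>z. \<forall>x\<in>op_dom T. cinner (app T x) y = cinner x z"
  obtain z where z: "?P z" using assms(2) by (auto simp: adj_def op_dom_def)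
  have uniq: "z' = z" if "?P z'" for z'
  proof -
    have "\<forall>x\<in>op_dom T. cinner x (z' - z) = 0" using that z by (simp add: ci_diff_right)
    then have "z' - z = 0" using dense_orth_zero assms(1) densely_defined_def by blast
    then show ?thesis by simp
  qed
  have "(THE z. ?P z) = z" using z uniq by (rule the_equality)
  then have "app (adj T) y = z" using z by (auto simp: adj_def app_def)
  then show ?thesis using z assms(3) by simp
qed

lemma real_quad:
  fixes a r :: real
  assumes "\<forall>t. t^2 * a + t * r \<ge> 0" "r \<ge> 0"
  shows "r = 0"
proof (rule ccontr)
  assume "r \<noteq> 0"
  then have rp: "r > 0" using assms(2) by simp
  define s where "s = r / (\<bar>a\<bar> + 1)"
  have sp: "s > 0" using rp by (simp add: s_def)
  have "s * \<bar>a\<bar> < r"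
  proof -
    have "s * \<bar>a\<bar> = r * (\<bar>a\<bar> / (\<bar>a\<bar> + 1))" by (simp add: s_def)
    also have "\<dots> < r * 1" using rp by (intro mult_strict_left_mono) auto
    finally show ?thesis by simp
  qed
  have "(-s)^2 * a + (-s) * r \<le> s^2 * \<bar>a\<bar> - s * r"
    by (simp add: power2_eq_square mult_left_mono sp)
  also have "\<dots> = s * (s * \<bar>a\<bar> - r)" by (simp add: power2_eq_square algebra_simps)
  also have "\<dots> < 0" using sp \<open>s * \<bar>a\<bar> < r\<close> by (simp add: mult_pos_neg)
  finally show False using assms(1) by (metis not_le)
qed

lemma key:
  fixes f :: "'a::complex_inner \<Rightarrow> 'a"
  assumes sub: "csubspace D"
    and add: "\<forall>x\<in>D. \<forall>y\<in>D. f (x + y) = f x + f y"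
    and sc: "\<forall>a. \<forall>x\<in>D. f (a *\<^sub>C x) = a *\<^sub>C f x"
    and inv: "\<forall>x\<in>D. f x \<in> D"
    and cond: "(\<forall>x\<in>D. Re (cinner (f x) x) \<ge> 0) \<or> (\<forall>x\<in>D. Im (cinner (f x) x) \<le> 0)"
    and w: "w \<in> D" and ffw: "f (f w) = 0"
  shows "f w = 0"
proof -
  define v where "v = f w"
  have vD: "v \<in> D" using inv w v_def by simp
  have fv: "f v = 0" using ffw v_def by simp
  define c where "c = cinner v w"
  define r where "r = (norm v)^2"
  have vv: "cinner v v = complex_of_real r" by (simp add: r_def cinner_self_norm)
  have expand: "cinner (f (s *\<^sub>C w + v)) (s *\<^sub>C w + v) = cnj s * s * c + cnj s * complex_of_real r"
    and inD: "s *\<^sub>C w + v \<in> D" for s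
  proof -
    have swD: "s *\<^sub>C w \<in> D" using sub w by (simp add: csubspace_def)
    show "s *\<^sub>C w + v \<in> D" using sub swD vD by (simp add: csubspace_def)
    have "f (s *\<^sub>C w + v) = s *\<^sub>C v" using add swD vD sc w fv v_def by simp
    then show "cinner (f (s *\<^sub>C w + v)) (s *\<^sub>C w + v) = cnj s * s * c + cnj s * complex_of_real r"
      by (simp add: ci_scaleC_left cinner_add_right cinner_scaleC_right c_def vv algebra_simps)
  qed
  have "\<forall>t. t^2 * a + t * r \<ge> 0" if "\<forall>t::real. t^2 * a + t * r \<ge> 0" for a using that by simp
  have "\<exists>a. \<forall>t::real. t^2 * a + t * r \<ge> 0"
    using cond
  proof
    assume h: "\<forall>x\<in>D. Re (cinner (f x) x) \<ge> 0"
    have "t^2 * Re c + t * r \<ge> 0" for t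
    proof -
      have "Re (cinner (f (complex_of_real t *\<^sub>C w + v)) (complex_of_real t *\<^sub>C w + v)) \<ge> 0"
        using h inD by blast
      then show ?thesis unfolding expand by (simp add: power2_eq_square)
    qed
    then show ?thesis by blast
  next
    assume h: "\<forall>x\<in>D. Im (cinner (f x) x) \<le> 0"
    have "t^2 * (- Im c) + t * r \<ge> 0" for t
    proof -
      have "Im (cinner (f ((\<i> * complex_of_real t) *\<^sub>C w + v)) ((\<i> * complex_of_real t) *\<^sub>C w + v)) \<le> 0"
        using h inD by blast
      then show ?thesis unfolding expand by (simp add: power2_eq_square)
    qed
    then show ?thesis by blast
  qed
  then obtain a where "\<forall>t::real. t^2 * a + t * r \<ge> 0" by blast
  then have "r = 0" using real_quad[of a r] r_def by simp
  then show ?thesis by (simp add: r_def v_def)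
qed


lemma pow_dom_suc: "op_dom (op_pow T (Suc k)) \<subseteq> op_dom (op_pow T k)"
  unfolding op_pow.simps op_comp_def op_dom_def by auto

lemma pow_dom_anti: "k \<le> n \<Longrightarrow> op_dom (op_pow T n) \<subseteq> op_dom (op_pow T k)"
proof (induction n rule: dec_induct)
  case base then show ?case by simp
next
  case (step m) show ?case using pow_dom_suc[of T m] step.IH by (rule subset_trans)
qed

lemma pow1_dom: "op_dom (op_pow T 1) = op_dom T"
  by (auto simp: op_comp_def op_dom_def op_id_def app_def)

lemma pow1_app: "app (op_pow T 1) x = app T x"
  by (auto simp: op_comp_def app_def op_id_def)

lemma pow2_dom: "op_dom (op_pow T 2) = {x \<in> op_dom T. app T x \<in> op_dom T}"
  by (auto simp: op_comp_def op_dom_def op_id_def app_def numeral_2_eq_2)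

lemma pow_app:
  assumes inv: "\<forall>x\<in>op_dom T. app T x \<in> op_dom T" and x: "x \<in> op_dom T"
  shows "x \<in> op_dom (op_pow T k) \<and> app (op_pow T k) x = (app T ^^ k) x"
proof (induction k)
  case 0 then show ?case by (simp add: op_id_def op_dom_def app_def)
next
  case (Suc k)
  have fx: "(app T ^^ k) x \<in> op_dom T"
  proof (induction k)
    case 0 then show ?case using x by simp
  next
    case (Suc k) then show ?case using inv by simp
  qed
  then show ?case using Suc by (simp add: op_comp_def op_dom_def app_def)
qed

lemma funpow_inv: "\<forall>x\<in>D. f x \<in> D \<Longrightarrow> x \<in> D \<Longrightarrow> (f ^^ k) x \<in> D"
  by (induction k) auto

lemma nil_funpow:
  assumes step: "\<forall>w\<in>D. f (f w) = 0 \<longrightarrow> f w = 0" and inv: "\<forall>x\<in>D. f x \<in> D"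
  shows "\<forall>x\<in>D. (f ^^ Suc m) x = 0 \<Longrightarrow> \<forall>x\<in>D. f x = 0"
proof (induction m)
  case 0 then show ?case by simp
next
  case (Suc m)
  have "\<forall>x\<in>D. (f ^^ Suc m) x = 0"
  proof
    fix x assume x: "x \<in> D"
    define w where "w = (f ^^ m) x"
    have wD: "w \<in> D" using funpow_inv[OF inv x] w_def by simp
    have "f (f w) = 0" using Suc.prems x w_def by simp
    then have "f w = 0" using step wD by blast
    then show "(f ^^ Suc m) x = 0" using w_def by simp
  qed
  then show ?case using Suc.IH by blast
qed

lemma adj_self:
  fixes T :: "'a::complex_inner op"
  assumes "densely_defined T" "op_dom T \<subseteq> op_dom (adj T)" "x \<in> op_dom T"
  shows "cinner (app (adj T) x) x = cnj (cinner (app T x) x)"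
  using adj_char[OF assms(1) _ assms(3), of x] assms by (metis cinner_commute subsetD)

lemma re_cond:
  fixes T :: "'a::complex_inner op"
  assumes "densely_defined T" "op_dom T \<subseteq> op_dom (adj T)" "positive_op (re_part T)"
  shows "\<forall>x\<in>op_dom T. Re (cinner (app T x) x) \<ge> 0"
proof
  fix x assume x: "x \<in> op_dom T"
  have xd: "x \<in> op_dom (re_part T)" using x assms(2) by (auto simp: re_part_def op_dom_def)
  have "Re (cinner (app (re_part T) x) x) \<ge> 0" using assms(3) xd by (simp add: positive_op_def)
  moreover have "cinner (app (re_part T) x) x = cnj (1/2) * (cinner (app T x) x + cnj (cinner (app T x) x))"
    by (simp add: re_part_def app_def ci_scaleC_left ci_add_left adj_self[OF assms(1,2) x, unfolded app_def])
  ultimately show "Re (cinner (app T x) x) \<ge> 0" by simp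
qed

lemma im_cond:
  fixes T :: "'a::complex_inner op"
  assumes "densely_defined T" "op_dom T \<subseteq> op_dom (adj T)" "positive_op (im_part T)"
  shows "\<forall>x\<in>op_dom T. Im (cinner (app T x) x) \<le> 0"
proof
  fix x assume x: "x \<in> op_dom T"
  have xd: "x \<in> op_dom (im_part T)" using x assms(2) by (auto simp: im_part_def op_dom_def)
  have "Re (cinner (app (im_part T) x) x) \<ge> 0" using assms(3) xd by (simp add: positive_op_def)
  moreover have "cinner (app (im_part T) x) x = cnj (1/(2*\<i>)) * (cinner (app T x) x - cnj (cinner (app T x) x))"
    by (simp add: im_part_def app_def ci_scaleC_left ci_diff_left adj_self[OF assms(1,2) x, unfolded app_def])
  moreover have "Re (cnj (1/(2*\<i>)) * (c - cnj c)) = - Im c" for c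
    by (simp add: Re_divide Im_divide)
  ultimately show "Im (cinner (app T x) x) \<le> 0" by simp
qed

theorem theorem2p5:
  fixes T :: "'a::chilbert_space op"
  assumes lin: "linear_op T"
    and dense: "densely_defined T"
    and closed: "closed_op T"
    and dom_adj: "op_dom T \<subseteq> op_dom (adj T)"
    and pos: "positive_op (re_part T) \<or> positive_op (im_part T)"
    and nilp: "\<exists>n. op_dom (op_pow T n) = op_dom T \<and> (\<forall>x\<in>op_dom T. app (op_pow T n) x = 0)"
  shows "in_BH T \<and> normal_op T \<and> (\<forall>x. app T x = 0)"
proof -
  let ?D = "op_dom T"
  obtain n where n: "op_dom (op_pow T n) = ?D" "\<forall>x\<in>?D. app (op_pow T n) x = 0" using nilp by blast
  have Tz: "\<forall>x\<in>?D. app T x = 0"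
  proof (cases "n \<ge> 2")
    case False
    then consider "n = 0" | "n = 1" by linarith
    then show ?thesis
    proof cases
      case 1
      then have "\<forall>x::'a. x = 0" using n by (auto simp: op_id_def op_dom_def app_def)
      then show ?thesis by blast
    next
      case 2
      then show ?thesis using n pow1_app[of T] by (metis One_nat_def)
    qed
  next
    case True
    have "?D \<subseteq> op_dom (op_pow T 2)" using n(1) pow_dom_anti[OF True, of T] by simp
    then have inv: "\<forall>x\<in>?D. app T x \<in> ?D" unfolding pow2_dom by blast
    have sn: "Suc (n - 1) = n" using True by simp
    have fn: "\<forall>x\<in>?D. (app T ^^ Suc (n - 1)) x = 0"
    proof
      fix x assume x: "x \<in> ?D"
      have "app (op_pow T n) x = (app T ^^ n) x" using pow_app[OF inv x] by blast
      then show "(app T ^^ Suc (n - 1)) x = 0" using n(2) x sn by simp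
    qed
    have cond: "(\<forall>x\<in>?D. Re (cinner (app T x) x) \<ge> 0) \<or> (\<forall>x\<in>?D. Im (cinner (app T x) x) \<le> 0)"
      using pos re_cond[OF dense dom_adj] im_cond[OF dense dom_adj] by blast
    have sub: "csubspace ?D" using lin by (simp add: linear_op_def)
    have ad: "\<forall>x\<in>?D. \<forall>y\<in>?D. app T (x + y) = app T x + app T y"
      and sc: "\<forall>a. \<forall>x\<in>?D. app T (a *\<^sub>C x) = a *\<^sub>C app T x"
      using lin unfolding linear_op_def by blast+
    have step: "\<forall>w\<in>?D. app T (app T w) = 0 \<longrightarrow> app T w = 0"
      using key[OF sub ad sc inv cond] by blast
    show ?thesis using nil_funpow[OF step inv fn] .
  qed
  have Deq: "?D = (\<lambda>x. (x, 0)) -` graph T"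
    using Tz by (auto simp: graph_def)
  have "closed ?D" unfolding Deq
    using closed unfolding closed_op_def
    by (rule continuous_closed_vimage) (intro continuous_intros)
  then have DU: "?D = UNIV" using dense by (simp add: densely_defined_def closure_closed)
  have all0: "\<forall>x. app T x = 0" using Tz DU by simp
  have bh: "in_BH T" using DU lin all0 unfolding in_BH_def by (metis mult_zero_left order_refl norm_zero)
  have adjdom: "op_dom (adj T) = UNIV"
  proof -
    have "\<forall>x\<in>?D. cinner (app T x) y = cinner x 0" for y using all0 by (simp add: ci_zero_left ci_zero_right)
    then show ?thesis unfolding adj_def op_dom_def fst_conv by blast
  qed
  have adj0: "app (adj T) y = 0" for y
  proof -
    have "cinner (app T x) y = cinner x (app (adj T) y)" for x
      using adj_char[OF dense, of y x] adjdom DU by simp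
    then have "\<forall>x\<in>?D. cinner x (app (adj T) y) = 0" using all0 by (simp add: ci_zero_left)
    then show ?thesis using dense_orth_zero dense by (auto simp: densely_defined_def)
  qed
  have "op_eq (op_comp T (adj T)) (op_comp (adj T) T)"
    using DU adjdom all0 adj0 by (simp add: op_eq_def op_comp_def op_dom_def app_def)
  then have "normal_op T" using dense closed by (simp add: normal_op_def)
  then show ?thesis using bh all0 by simp
qed

end
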